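(* As a polynomial in $D$, \[ L(u)=\sum_{i=n+2}^{N}(-1)^iT^{(N-i)}_1\Bigl(u+\frac i2\Bigr)D^i-\sum_{i=0}^n(-1)^iT^{(i)}_1\Bigl(u+\frac i2\Bigr)D^i , \] where $T^{(0)}_1(u)=1$ (in particular the coefficient of $D^{n+1}$ is $0$). Equivalently, with the extension of $T^{(a)}_1$ to all $a\in\mathbb Z$ described below, $L(u)=-\sum_{i=0}^N(-1)^iT^{(i)}_1(u+\frac i2)D^i$.
   Context: Fix an integer $n\ge 2$ and put $N=2n+2$. Let $Q_a(u)$ ($1\le a\le n$, $u\in\mathbb C$) be algebraically independent commuting indeterminates, $\mathcal K$ the field of fractions of $\mathbb Z[Q_a(u)^{\pm1}]$. Put $d_a=1+\delta_{an}$, $Y_a(u)=Q_a(u-\frac{d_a}{2})/Q_a(u+\frac{d_a}{2})$ for $1\le a\le n$, $Y_0(u)=1$. Let $J=\{1\prec2\prec\cdots\prec n\prec\bar n\prec\cdots\prec\bar2\prec\bar1\}$. For $1\le a\le n$ set $z_a(u)=\frac{Y_a(u+\frac a2)}{Y_{a-1}(u+\frac{a+1}2)}$, $z_{\bar a}(u)=\frac{Y_{a-1}(u+\frac{2n-a+3}2)}{Y_a(u+\frac{2n-a+4}2)}$; set $x_a(u)=z_a(u)$, $x_{2n+3-a}(u)=z_{\bar a}(u)$ for $1\le a\le n$, and $x_{n+1}(u)=-x_{n+2}(u)=\frac{Q_n(u+\frac n2)Q_n(u+\frac{n+4}2)}{Q_n(u+\frac{n+2}2)^2}$. $D$ is the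 shift operator: difference operators $\sum_jc_j(u)D^j$ ($c_j(u)\in\mathcal K$) are multiplied using $D\,c(u)=c(u+1)D$. Define $L(u)=(x_1(u+n)-D)(x_2(u+n-1)-D)\cdots(x_N(u+n+1-N)-D)$ (factors in order $i=1,\dots,N$ from left to right, the $i$-th being $x_i(u+n+1-i)-D$). For $1\le a\le n$ define $T^{(a)}_1(u)$ by $T^{(a)}_1(u+\frac12)=\sum z_{i_1}(u+\frac{a-1}2)z_{i_2}(u+\frac{a-3}2)\cdots z_{i_a}(u-\frac{a-1}2)$, the sum over $(i_1,\dots,i_a)\in J^a$ with $i_1\prec\cdots\prec i_a$ such that whenever $i_k=c$, $i_l=\bar c$ for some $1\le c\le n$, one has $n+k-l\ge c$. Set $T^{(0)}_1(u)=1$, $T^{(a)}_1(u)=0$ for $a<0$, $T^{(n+1)}_1(u)=0$, and $T^{(a)}_1(u)=-T^{(N-a)}_1(u)$ for $a\ge n+2$ (so $T^{(N)}_1=-1$ and $T^{(a)}_1=0$ for $a>N$). *)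

theory Defs
  imports Complex_Main
begin

text \<open>Setting: n is the rank, N = 2n+2.  The indeterminates Q_a(u) (1 <= a <= n, u complex)
  take values in an arbitrary field 'k and are assumed nonzero.  All quantities involved
  (Y, z, x, T, coefficients of L) are Laurent monomials/polynomials in the Q's with integer
  coefficients, so an identity in the fraction field of Z[Q^{+-1}] is the same as an identity
  valid for every nonzero specialization into every field.\<close>

definition dA :: "nat \<Rightarrow> nat \<Rightarrow> complex" where
  "dA n a = (if a = n then 2 else 1)"

definition Ycal :: "nat \<Rightarrow> (nat \<Rightarrow> complex \<Rightarrow> 'k::field) \<Rightarrow> nat \<Rightarrow> complex \<Rightarrow> 'k" where
  "Ycal n Q a u = (if a = 0 then 1 else Q a (u - dA n a / 2) / Q a (u + dA n a / 2))"

definition zp :: "nat \<Rightarrow> (nat \<Rightarrow> complex \<Rightarrow> 'k::field) \<Rightarrow> nat \<Rightarrow> complex \<Rightarrow> 'k" where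
  "zp n Q a u = Ycal n Q a (u + of_nat a / 2) / Ycal n Q (a - 1) (u + (of_nat a + 1) / 2)"

definition zb :: "nat \<Rightarrow> (nat \<Rightarrow> complex \<Rightarrow> 'k::field) \<Rightarrow> nat \<Rightarrow> complex \<Rightarrow> 'k" where
  "zb n Q a u = Ycal n Q (a - 1) (u + (2 * of_nat n - of_nat a + 3) / 2)
              / Ycal n Q a (u + (2 * of_nat n - of_nat a + 4) / 2)"

text \<open>The alphabet J = {1 < ... < n < bar n < ... < bar 1} is encoded as {1..2n}:
  j <= n encodes j, and j > n encodes bar (2n+1-j); the order is the order on nat.\<close>
definition zJ :: "nat \<Rightarrow> (nat \<Rightarrow> complex \<Rightarrow> 'k::field) \<Rightarrow> nat \<Rightarrow> complex \<Rightarrow> 'k" where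
  "zJ n Q j u = (if j \<le> n then zp n Q j u else zb n Q (2 * n + 1 - j) u)"

definition Xmid :: "nat \<Rightarrow> (nat \<Rightarrow> complex \<Rightarrow> 'k::field) \<Rightarrow> complex \<Rightarrow> 'k" where
  "Xmid n Q u = Q n (u + of_nat n / 2) * Q n (u + (of_nat n + 4) / 2) / (Q n (u + (of_nat n + 2) / 2))^2"

definition xN :: "nat \<Rightarrow> (nat \<Rightarrow> complex \<Rightarrow> 'k::field) \<Rightarrow> nat \<Rightarrow> complex \<Rightarrow> 'k" where
  "xN n Q i u = (if i \<le> n then zp n Q i u
                 else if i = n + 1 then Xmid n Q u
                 else if i = n + 2 then - Xmid n Q u
                 else zb n Q (2 * n + 3 - i) u)"

text \<open>Admissible tuples (i_1 < ... < i_a) in J^a (0-indexed positions in the list;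
  the condition n + k - l >= c only involves the difference of positions).\<close>
definition admissible :: "nat \<Rightarrow> nat list \<Rightarrow> bool" where
  "admissible n xs \<longleftrightarrow> sorted_wrt (<) xs \<and> set xs \<subseteq> {1..2 * n} \<and>
     (\<forall>k < length xs. \<forall>l < length xs. \<forall>c. 1 \<le> c \<and> c \<le> n \<and> xs ! k = c \<and> xs ! l = 2 * n + 1 - c
        \<longrightarrow> int n + int k - int l \<ge> int c)"

text \<open>T^{(a)}_1(u) for 0 <= a <= n, obtained from the defining formula for T^{(a)}_1(u+1/2)
  by replacing u with u - 1/2: the k-th factor (k = 1..a) is evaluated at
  u - 1/2 + (a-1)/2 - (k-1) = u + a/2 - k.\<close>
definition T1 :: "nat \<Rightarrow> (nat \<Rightarrow> complex \<Rightarrow> 'k::field) \<Rightarrow> nat \<Rightarrow> complex \<Rightarrow> 'k" where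
  "T1 n Q a u = (if a = 0 then 1 else
     (\<Sum>xs \<in> {xs. length xs = a \<and> admissible n xs}.
        \<Prod>k < a. zJ n Q (xs ! k) (u + of_nat a / 2 - of_nat (k + 1))))"

text \<open>Difference operators sum_j c_j(u) D^j: represented by the coefficient function
  (j, u) |-> c_j(u).  Multiplication uses D c(u) = c(u+1) D.\<close>
type_synonym 'k dop = "nat \<Rightarrow> complex \<Rightarrow> 'k"

definition dop_mult :: "'k::field dop \<Rightarrow> 'k dop \<Rightarrow> 'k dop" where
  "dop_mult A B = (\<lambda>k u. \<Sum>i\<le>k. A i u * B (k - i) (u + of_nat i))"

definition dop_one :: "'k::field dop" where
  "dop_one = (\<lambda>k u. if k = 0 then 1 else 0)"

definition dop_lin :: "(complex \<Rightarrow> 'k::field) \<Rightarrow> 'k dop" where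
  "dop_lin f = (\<lambda>k u. if k = 0 then f u else if k = 1 then -1 else 0)"

definition Lop :: "nat \<Rightarrow> (nat \<Rightarrow> complex \<Rightarrow> 'k::field) \<Rightarrow> 'k dop" where
  "Lop n Q = foldr dop_mult
     (map (\<lambda>i. dop_lin (\<lambda>v. xN n Q i (v + of_int (int n + 1 - int i)))) [1..<2 * n + 3])
     dop_one"

end

theory Submission
  imports Defs
begin

lemma dop_mult_assoc:
  fixes A B C :: "'k::field dop"
  shows "dop_mult (dop_mult A B) C = dop_mult A (dop_mult B C)"
proof (intro ext)
  fix k u
  define g where "g = (\<lambda>i j. A i u * B j (u + of_nat i) * C (k - i - j) (u + of_nat i + of_nat j))"
  have "dop_mult (dop_mult A B) C k u = (\<Sum>s\<le>k. \<Sum>i\<le>s. g i (s - i))"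
    unfolding dop_mult_def g_def
    by (auto simp: sum_distrib_right intro!: sum.cong simp: add.assoc)
  also have "\<dots> = (\<Sum>(i,j)\<in>{(i,j). i+j \<le> k}. g i j)"
    by (rule sum.triangle_reindex_eq[symmetric])
  also have "{(i,j). i+j \<le> k} = Sigma {..k} (\<lambda>i. {..k-i})" by auto
  also have "(\<Sum>(i,j)\<in>Sigma {..k} (\<lambda>i. {..k-i}). g i j) = (\<Sum>i\<le>k. \<Sum>j\<le>k-i. g i j)"
    by (rule sum.Sigma[symmetric]) auto
  also have "\<dots> = dop_mult A (dop_mult B C) k u"
    unfolding dop_mult_def g_def
    by (auto simp: sum_distrib_left intro!: sum.cong simp: mult.assoc add.assoc diff_diff_add)
  finally show "dop_mult (dop_mult A B) C k u = dop_mult A (dop_mult B C) k u" .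
qed

lemma dop_one_left: "dop_mult dop_one A = (A :: 'k::field dop)"
  by (intro ext) (simp add: dop_mult_def dop_one_def sum.atMost_shift)

lemma dop_one_right: "dop_mult A dop_one = (A :: 'k::field dop)"
proof (intro ext)
  fix k u
  have "dop_mult A dop_one k u = (\<Sum>i\<le>k. if i = k then A i u else 0)"
    unfolding dop_mult_def dop_one_def by (intro sum.cong) auto
  then show "dop_mult A dop_one k u = A k u" by simp
qed

lemma foldr_dop: "foldr dop_mult xs B = dop_mult (foldr dop_mult xs dop_one) (B :: 'k::field dop)"
  by (induction xs) (simp_all add: dop_one_left dop_mult_assoc)

lemma lin_mult: "dop_mult (dop_lin f) C k u = f u * C k u - (if k \<ge> 1 then C (k-1) (u+1) else (0::'k::field))"
proof -
  have "dop_mult (dop_lin f) C k u = (\<Sum>i\<le>k. (if i = 0 then f u * C k u else 0) + (if i = 1 then - C (k-1) (u+1) else 0))"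
    unfolding dop_mult_def dop_lin_def by (intro sum.cong) auto
  also have "\<dots> = f u * C k u - (if k \<ge> 1 then C (k-1) (u+1) else 0)"
    by (auto simp: sum.distrib)
  finally show ?thesis .
qed

lemma mult_lin: "dop_mult C (dop_lin g) k u = C k u * g (u + of_nat k) - (if k \<ge> 1 then C (k-1) u else (0::'k::field))"
proof -
  have "dop_mult C (dop_lin g) k u = (\<Sum>i\<le>k. (if i = k then C k u * g (u + of_nat k) else 0) + (if Suc i = k then - C i u else 0))"
    unfolding dop_mult_def dop_lin_def by (intro sum.cong) auto
  also have "\<dots> = C k u * g (u + of_nat k) - (if k \<ge> 1 then C (k-1) u else 0)"
    by (cases k) (auto simp: sum.distrib)
  finally show ?thesis .
qed

fun WW :: "nat \<Rightarrow> (nat \<Rightarrow> complex \<Rightarrow> 'k::field) \<Rightarrow> nat list \<Rightarrow> complex \<Rightarrow> 'k" where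
  "WW n Q [] w = 1"
| "WW n Q (x # xs) w = zJ n Q x (w - 1) * WW n Q xs (w - 1)"

lemma WW_prod: "WW n Q xs w = (\<Prod>k<length xs. zJ n Q (xs ! k) (w - of_nat (k + 1)))"
proof (induction xs arbitrary: w)
  case Nil then show ?case by simp
next
  case (Cons x xs)
  show ?case
    by (simp add: Cons prod.lessThan_Suc_shift algebra_simps del: prod.lessThan_Suc)
qed

lemma WW_snoc: "WW n Q (xs @ [y]) w = WW n Q xs w * zJ n Q y (w - of_nat (length xs + 1))"
  by (induction xs arbitrary: w) (simp_all add: algebra_simps)

definition AS :: "nat \<Rightarrow> nat \<Rightarrow> nat \<Rightarrow> nat list set" where
  "AS n r m = {xs. length xs = m \<and> admissible n xs \<and> set xs \<subseteq> {r+1..2*n-r}}"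

lemma AS_finite: "finite (AS n r m)"
proof -
  have "AS n r m \<subseteq> {xs. set xs \<subseteq> {r+1..2*n-r} \<and> length xs = m}" by (auto simp: AS_def)
  moreover have "finite {xs. set xs \<subseteq> {r+1..2*n-r} \<and> length xs = m}"
    by (rule finite_lists_length_eq) simp
  ultimately show ?thesis by (rule finite_subset)
qed

definition SS :: "nat \<Rightarrow> (nat \<Rightarrow> complex \<Rightarrow> 'k::field) \<Rightarrow> nat \<Rightarrow> nat \<Rightarrow> complex \<Rightarrow> 'k" where
  "SS n Q r m w = (\<Sum>xs\<in>AS n r m. WW n Q xs w)"

lemma T1_SS: "T1 n Q a u = SS n Q 0 a (u + of_nat a / 2)"
proof (cases "a = 0")
  case True
  have "AS n 0 0 = {[]}" by (auto simp: AS_def admissible_def)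
  then show ?thesis using True by (simp add: T1_def SS_def)
next
  case False
  have "AS n 0 a = {xs. length xs = a \<and> admissible n xs}" by (auto simp: AS_def admissible_def)
  then show ?thesis using False by (simp add: T1_def SS_def WW_prod)
qed

lemma adm_Cons:
  assumes "1 \<le> a" "a \<le> n" "set ys \<subseteq> {a+1..2*n-a}"
  shows "admissible n (a # ys) \<longleftrightarrow> admissible n ys"
proof
  assume A: "admissible n (a # ys)"
  show "admissible n ys"
    unfolding admissible_def
  proof (intro conjI allI impI)
    show "sorted_wrt (<) ys" using A by (simp add: admissible_def)
    show "set ys \<subseteq> {1..2*n}" using A by (auto simp: admissible_def)
    fix k l c assume "k < length ys" "l < length ys" "1 \<le> c \<and> c \<le> n \<and> ys ! k = c \<and> ys ! l = 2 * n + 1 - c"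
    then have "int n + int (Suc k) - int (Suc l) \<ge> int c"
      using A unfolding admissible_def
      by (metis Suc_less_eq length_Cons nth_Cons_Suc)
    then show "int n + int k - int l \<ge> int c" by simp
  qed
next
  assume A: "admissible n ys"
  show "admissible n (a # ys)"
    unfolding admissible_def
  proof (intro conjI allI impI)
    show "sorted_wrt (<) (a # ys)" using A assms(3) by (auto simp: admissible_def)
    show "set (a # ys) \<subseteq> {1..2*n}" using A assms by (auto simp: admissible_def)
    fix k l c assume kl: "k < length (a # ys)" "l < length (a # ys)"
      and c: "1 \<le> c \<and> c \<le> n \<and> (a # ys) ! k = c \<and> (a # ys) ! l = 2 * n + 1 - c"
    show "int n + int k - int l \<ge> int c"
    proof (cases k)
      case 0
      then have "c = a" using c by simp
      show ?thesis
      proof (cases l)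
        case 0 then show ?thesis using c \<open>c = a\<close> \<open>k = 0\<close> by simp
      next
        case (Suc l')
        then have "ys ! l' \<in> set ys" using kl by simp
        moreover have "ys ! l' = 2*n+1-a" using c Suc \<open>c = a\<close> by simp
        ultimately have "2*n+1-a \<in> {a+1..2*n-a}" using assms(3) by auto
        then show ?thesis using assms(2) by auto
      qed
    next
      case (Suc k')
      show ?thesis
      proof (cases l)
        case 0 then show ?thesis using c assms by simp
      next
        case (Suc l')
        then have "int n + int k' - int l' \<ge> int c"
          using A c kl \<open>k = Suc k'\<close> unfolding admissible_def by (metis Suc_less_eq length_Cons nth_Cons_Suc)
        then show ?thesis using Suc \<open>k = Suc k'\<close> by simp
      qed
    qed
  qed
qed

lemma adm_ConsD: assumes A: "admissible n (a # ys)" shows "admissible n ys"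
  unfolding admissible_def
proof (intro conjI allI impI)
  show "sorted_wrt (<) ys" using A by (simp add: admissible_def)
  show "set ys \<subseteq> {1..2*n}" using A by (auto simp: admissible_def)
  fix k l c assume "k < length ys" "l < length ys" "1 \<le> c \<and> c \<le> n \<and> ys ! k = c \<and> ys ! l = 2 * n + 1 - c"
  then have "int n + int (Suc k) - int (Suc l) \<ge> int c"
    using A unfolding admissible_def by (metis Suc_less_eq length_Cons nth_Cons_Suc)
  then show "int n + int k - int l \<ge> int c" by simp
qed

lemma adm_snocD: assumes A: "admissible n (ys @ [b])" shows "admissible n ys"
  unfolding admissible_def
proof (intro conjI allI impI)
  show "sorted_wrt (<) ys" using A by (simp add: sorted_wrt_append admissible_def)
  show "set ys \<subseteq> {1..2*n}" using A by (auto simp: admissible_def)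
  fix k l c assume kl: "k < length ys" "l < length ys" "1 \<le> c \<and> c \<le> n \<and> ys ! k = c \<and> ys ! l = 2 * n + 1 - c"
  then have "(ys @ [b]) ! k = c" "(ys @ [b]) ! l = 2*n+1-c" by (simp_all add: nth_append)
  moreover have "k < length (ys @ [b])" "l < length (ys @ [b])" using kl by auto
  ultimately show "int n + int k - int l \<ge> int c" using A kl unfolding admissible_def by blast
qed

lemma adm_snoc:
  assumes "1 \<le> a" "a \<le> n" "set ys \<subseteq> {a+1..2*n-a}"
  shows "admissible n (ys @ [2*n+1-a]) \<longleftrightarrow> admissible n ys"
proof
  assume "admissible n (ys @ [2*n+1-a])" then show "admissible n ys" by (rule adm_snocD)
next
  assume A: "admissible n ys"
  show "admissible n (ys @ [2*n+1-a])"
    unfolding admissible_def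
  proof (intro conjI allI impI)
    show "sorted_wrt (<) (ys @ [2*n+1-a])" using A assms by (force simp: admissible_def sorted_wrt_append)
    show "set (ys @ [2*n+1-a]) \<subseteq> {1..2*n}" using A assms by (auto simp: admissible_def)
    fix k l c assume kl: "k < length (ys @ [2*n+1-a])" "l < length (ys @ [2*n+1-a])"
      and c: "1 \<le> c \<and> c \<le> n \<and> (ys @ [2*n+1-a]) ! k = c \<and> (ys @ [2*n+1-a]) ! l = 2 * n + 1 - c"
    show "int n + int k - int l \<ge> int c"
    proof (cases "k < length ys")
      case False
      then have "k = length ys" using kl by simp
      then have "c = 2*n+1-a" using c by simp
      then show ?thesis using c assms by arith
    next
      case True
      then have ck: "ys ! k = c" using c by (simp add: nth_append)
      show ?thesis
      proof (cases "l < length ys")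
        case False
        then have "l = length ys" using kl by simp
        then have "c = a" using c assms by (simp; arith)
        then have "a \<in> set ys" using ck True by auto
        then show ?thesis using assms(3) by auto
      next
        case True
        then have "ys ! l = 2*n+1-c" using c by (simp add: nth_append)
        then show ?thesis using A ck True \<open>k < length ys\<close> c unfolding admissible_def by blast
      qed
    qed
  qed
qed

lemma adm_both:
  assumes "1 \<le> a" "a \<le> n" "set ys \<subseteq> {a+1..2*n-a}"
  shows "admissible n (a # ys @ [2*n+1-a]) \<longleftrightarrow> admissible n ys \<and> length ys + 2 \<le> n + 1 - a"
proof
  assume A: "admissible n (a # ys @ [2*n+1-a])"
  then have "admissible n ys" by (metis adm_ConsD adm_snocD)
  moreover have "int n + int 0 - int (length ys + 1) \<ge> int a"
  proof -
    have "length ys + 1 < length (a # ys @ [2*n+1-a])" by simp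
    moreover have "(a # ys @ [2*n+1-a]) ! (length ys + 1) = 2*n+1-a" by (simp add: nth_append)
    ultimately show ?thesis using A assms unfolding admissible_def
      by (metis length_greater_0_conv list.distinct(1) nth_Cons_0)
  qed
  ultimately show "admissible n ys \<and> length ys + 2 \<le> n + 1 - a" by simp
next
  assume A: "admissible n ys \<and> length ys + 2 \<le> n + 1 - a"
  show "admissible n (a # ys @ [2*n+1-a])"
    unfolding admissible_def
  proof (intro conjI allI impI)
    show "sorted_wrt (<) (a # ys @ [2*n+1-a])" using A assms by (force simp: admissible_def sorted_wrt_append)
    show "set (a # ys @ [2*n+1-a]) \<subseteq> {1..2*n}" using A assms by (auto simp: admissible_def)
    fix k l c assume kl: "k < length (a # ys @ [2*n+1-a])" "l < length (a # ys @ [2*n+1-a])"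
      and c: "1 \<le> c \<and> c \<le> n \<and> (a # ys @ [2*n+1-a]) ! k = c \<and> (a # ys @ [2*n+1-a]) ! l = 2 * n + 1 - c"
    have pos: "\<And>i. i < length (a # ys @ [2*n+1-a]) \<Longrightarrow> i = 0 \<or> (\<exists>j. i = Suc j \<and> j < length ys) \<or> i = length ys + 1"
      by (case_tac i) auto
    have n0: "(a # ys @ [2*n+1-a]) ! 0 = a" by simp
    have nS: "\<And>j. j < length ys \<Longrightarrow> (a # ys @ [2*n+1-a]) ! Suc j = ys ! j" by (simp add: nth_append)
    have nL: "(a # ys @ [2*n+1-a]) ! (length ys + 1) = 2*n+1-a" by (simp add: nth_append)
    have notin: "\<And>j. j < length ys \<Longrightarrow> ys ! j \<noteq> a \<and> ys ! j \<noteq> 2*n+1-a"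
    proof -
      fix j assume "j < length ys"
      then have "ys ! j \<in> {a+1..2*n-a}" using assms(3) nth_mem by blast
      then show "ys ! j \<noteq> a \<and> ys ! j \<noteq> 2*n+1-a" using assms by auto
    qed
    from pos[OF kl(1)] show "int n + int k - int l \<ge> int c"
    proof (elim disjE exE conjE)
      assume "k = 0"
      then have "c = a" using c by simp
      from pos[OF kl(2)] show ?thesis
      proof (elim disjE exE conjE)
        assume "l = 0" then show ?thesis using c \<open>c = a\<close> assms by simp
      next
        fix j assume "l = Suc j" "j < length ys"
        then show ?thesis using c notin nS \<open>c = a\<close> by metis
      next
        assume "l = length ys + 1" then show ?thesis using A \<open>k = 0\<close> \<open>c = a\<close> by arith
      qed
    next
      fix i assume ki: "k = Suc i" "i < length ys"
      then have ci: "ys ! i = c" using c nS by metis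
      from pos[OF kl(2)] show ?thesis
      proof (elim disjE exE conjE)
        assume "l = 0" then show ?thesis using c assms by simp
      next
        fix j assume lj: "l = Suc j" "j < length ys"
        then have "ys ! j = 2*n+1-c" using c nS by metis
        then have "int n + int i - int j \<ge> int c" using A ci ki lj c unfolding admissible_def by blast
        then show ?thesis using ki lj by simp
      next
        assume "l = length ys + 1"
        then have "c = a" using c nL assms by (simp; arith)
        then show ?thesis using notin ci ki by metis
      qed
    next
      assume "k = length ys + 1"
      then have "c = 2*n+1-a" using c nL by simp
      then show ?thesis using c assms by arith
    qed
  qed
qed

lemma sorted_hd: "sorted_wrt (<) xs \<Longrightarrow> a \<in> set xs \<Longrightarrow> \<forall>x\<in>set xs. a \<le> (x::nat) \<Longrightarrow> \<exists>ys. xs = a # ys"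
  by (cases xs) force+

lemma sorted_last: "sorted_wrt (<) xs \<Longrightarrow> b \<in> set xs \<Longrightarrow> \<forall>x\<in>set xs. x \<le> (b::nat) \<Longrightarrow> \<exists>ys. xs = ys @ [b]"
  by (cases xs rule: rev_cases) (force simp: sorted_wrt_append)+

lemma SS_rec:
  fixes Q :: "nat \<Rightarrow> complex \<Rightarrow> 'k::field"
  assumes rn: "r < n"
  shows "SS n Q r m v = SS n Q (r+1) m v
    + (if m \<ge> 1 then zp n Q (r+1) (v-1) * SS n Q (r+1) (m-1) (v-1) + SS n Q (r+1) (m-1) v * zb n Q (r+1) (v - of_nat m) else 0)
    + (if 2 \<le> m \<and> m \<le> n - r then zp n Q (r+1) (v-1) * SS n Q (r+1) (m-2) (v-1) * zb n Q (r+1) (v - of_nat m) else 0)"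
proof -
  define a where "a = r + 1"
  define b where "b = 2*n+1-a"
  have a1: "1 \<le> a" and an: "a \<le> n" using rn by (auto simp: a_def)
  have bdef: "2*n - r = b" using rn by (simp add: a_def b_def)
  have ab: "a < b" using rn by (simp add: a_def b_def)
  have AS1: "AS n (r+1) k = {xs. length xs = k \<and> admissible n xs \<and> set xs \<subseteq> {a+1..2*n-a}}" for k
    by (simp add: AS_def a_def)
  have AS1': "AS n (Suc r) k = {xs. length xs = k \<and> admissible n xs \<and> set xs \<subseteq> {a+1..2*n-a}}" for k
    using AS1[of k] by simp
  have AS0: "AS n r k = {xs. length xs = k \<and> admissible n xs \<and> set xs \<subseteq> {a..b}}" for k
    by (simp add: AS_def a_def bdef[symmetric])
  have zJa: "zJ n Q a = zp n Q a" using an by (simp add: zJ_def fun_eq_iff)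
  have zJb: "zJ n Q b = zb n Q a" using an by (auto simp: zJ_def fun_eq_iff b_def)
  have zJa': "zJ n Q (Suc r) = zp n Q (Suc r)" using zJa by (simp add: a_def)
  let ?W = "\<lambda>xs. WW n Q xs v"
  let ?A = "AS n r m"
  have fin: "finite ?A" by (rule AS_finite)
  have "SS n Q r m v = (\<Sum>xs\<in>?A. (if a \<notin> set xs \<and> b \<notin> set xs then ?W xs else 0) + (if a \<in> set xs \<and> b \<notin> set xs then ?W xs else 0)
        + (if a \<notin> set xs \<and> b \<in> set xs then ?W xs else 0) + (if a \<in> set xs \<and> b \<in> set xs then ?W xs else 0))"
    unfolding SS_def by (intro sum.cong) auto
  also have "\<dots> = (\<Sum>xs\<in>{xs\<in>?A. a \<notin> set xs \<and> b \<notin> set xs}. ?W xs) + (\<Sum>xs\<in>{xs\<in>?A. a \<in> set xs \<and> b \<notin> set xs}. ?W xs)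
      + (\<Sum>xs\<in>{xs\<in>?A. a \<notin> set xs \<and> b \<in> set xs}. ?W xs) + (\<Sum>xs\<in>{xs\<in>?A. a \<in> set xs \<and> b \<in> set xs}. ?W xs)"
    by (simp add: sum.distrib sum.inter_filter[OF fin])
  finally have split: "SS n Q r m v = \<dots>" .
  have E1: "{xs\<in>?A. a \<notin> set xs \<and> b \<notin> set xs} = AS n (r+1) m"
  proof -
    have x: "x \<in> {a..b} \<and> x \<noteq> a \<and> x \<noteq> b \<longleftrightarrow> x \<in> {a+1..2*n-a}" for x
      using ab an by (simp add: b_def) arith
    have "\<And>xs. set xs \<subseteq> {a..b} \<and> a \<notin> set xs \<and> b \<notin> set xs \<longleftrightarrow> set xs \<subseteq> {a+1..2*n-a}"
      using x by blast
    then show ?thesis unfolding AS0 AS1 by blast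
  qed
  have S1: "(\<Sum>xs\<in>{xs\<in>?A. a \<notin> set xs \<and> b \<notin> set xs}. ?W xs) = SS n Q (r+1) m v"
    unfolding E1 SS_def ..
  have x: "x \<in> {a..b} \<and> x \<noteq> a \<and> x \<noteq> b \<longleftrightarrow> x \<in> {a+1..2*n-a}" for x
    using ab an by (simp add: b_def) arith
  have hx: "set ys \<subseteq> {a..b} \<Longrightarrow> a \<notin> set ys \<Longrightarrow> b \<notin> set ys \<Longrightarrow> set ys \<subseteq> {a+1..2*n-a}" for ys
    using x by blast
  have sub: "{a+1..2*n-a} \<subseteq> {a..b}" "a \<notin> {a+1..2*n-a}" "b \<notin> {a+1..2*n-a}" using x by auto
  have adC: "set ys \<subseteq> {a+1..2*n-a} \<Longrightarrow> admissible n (a # ys) \<longleftrightarrow> admissible n ys" for ys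
    using adm_Cons[OF a1 an] .
  have adS: "set ys \<subseteq> {a+1..2*n-a} \<Longrightarrow> admissible n (ys @ [b]) \<longleftrightarrow> admissible n ys" for ys
    using adm_snoc[OF a1 an] by (simp add: b_def)
  have adB: "set ys \<subseteq> {a+1..2*n-a} \<Longrightarrow> admissible n (a # ys @ [b]) \<longleftrightarrow> admissible n ys \<and> length ys + 2 \<le> n + 1 - a" for ys
    using adm_both[OF a1 an] by (simp add: b_def)
  have srt: "xs \<in> ?A \<Longrightarrow> sorted_wrt (<) xs" for xs by (simp add: AS0 admissible_def)
  have S2: "(\<Sum>xs\<in>{xs\<in>?A. a \<in> set xs \<and> b \<notin> set xs}. ?W xs) =
      (if m \<ge> 1 then zp n Q (r+1) (v-1) * SS n Q (r+1) (m-1) (v-1) else 0)"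
  proof (cases "m \<ge> 1")
    case False
    then have "m = 0" by simp
    then have e: "{xs\<in>?A. a \<in> set xs \<and> b \<notin> set xs} = {}" by (auto simp: AS0)
    show ?thesis unfolding e using False by simp
  next
    case True
    have E: "{xs\<in>?A. a \<in> set xs \<and> b \<notin> set xs} = (Cons a) ` AS n (r+1) (m-1)"
    proof (intro equalityI subsetI)
      fix xs assume xs: "xs \<in> {xs\<in>?A. a \<in> set xs \<and> b \<notin> set xs}"
      then obtain ys where ys: "xs = a # ys" using sorted_hd[of xs a] srt by (force simp: AS0)
      have "a \<notin> set ys" using srt xs ys by fastforce
      moreover have "set ys \<subseteq> {a..b}" using xs ys by (auto simp: AS0)
      ultimately have "set ys \<subseteq> {a+1..2*n-a}" using xs ys hx by (auto simp: AS0)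
      then have "ys \<in> AS n (r+1) (m-1)" using xs ys adC by (auto simp: AS0 AS1 AS1')
      then show "xs \<in> (Cons a) ` AS n (r+1) (m-1)" using ys by blast
    next
      fix xs assume "xs \<in> (Cons a) ` AS n (r+1) (m-1)"
      then obtain ys where ys: "xs = a # ys" "ys \<in> AS n (r+1) (m-1)" by blast
      then have y: "set ys \<subseteq> {a+1..2*n-a}" "length ys = m - 1" "admissible n ys" by (auto simp: AS1')
      have "admissible n xs" using y adC ys by simp
      moreover have "set xs \<subseteq> {a..b}" "b \<notin> set xs" "length xs = m" using y sub ab ys True by auto
      ultimately show "xs \<in> {xs\<in>?A. a \<in> set xs \<and> b \<notin> set xs}" using ys by (simp add: AS0)
    qed
    show ?thesis using True unfolding E
      by (simp add: sum.reindex SS_def sum_distrib_left zJa zJa' a_def)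
  qed
  have S3: "(\<Sum>xs\<in>{xs\<in>?A. a \<notin> set xs \<and> b \<in> set xs}. ?W xs) =
      (if m \<ge> 1 then SS n Q (r+1) (m-1) v * zb n Q (r+1) (v - of_nat m) else 0)"
  proof (cases "m \<ge> 1")
    case False
    then have "m = 0" by simp
    then have e: "{xs\<in>?A. a \<notin> set xs \<and> b \<in> set xs} = {}" by (auto simp: AS0)
    show ?thesis unfolding e using False by simp
  next
    case True
    have E: "{xs\<in>?A. a \<notin> set xs \<and> b \<in> set xs} = (\<lambda>ys. ys @ [b]) ` AS n (r+1) (m-1)"
    proof (intro equalityI subsetI)
      fix xs assume xs: "xs \<in> {xs\<in>?A. a \<notin> set xs \<and> b \<in> set xs}"
      then obtain ys where ys: "xs = ys @ [b]" using sorted_last[of xs b] srt by (force simp: AS0)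
      have "b \<notin> set ys" using srt xs ys by (fastforce simp: sorted_wrt_append)
      moreover have "set ys \<subseteq> {a..b}" using xs ys by (auto simp: AS0)
      ultimately have "set ys \<subseteq> {a+1..2*n-a}" using xs ys hx by (auto simp: AS0)
      then have "ys \<in> AS n (r+1) (m-1)" using xs ys adS by (auto simp: AS0 AS1 AS1')
      then show "xs \<in> (\<lambda>ys. ys @ [b]) ` AS n (r+1) (m-1)" using ys by blast
    next
      fix xs assume "xs \<in> (\<lambda>ys. ys @ [b]) ` AS n (r+1) (m-1)"
      then obtain ys where ys: "xs = ys @ [b]" "ys \<in> AS n (r+1) (m-1)" by blast
      then have y: "set ys \<subseteq> {a+1..2*n-a}" "length ys = m - 1" "admissible n ys" by (auto simp: AS1')
      have "admissible n xs" using y adS ys by simp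
      moreover have "set xs \<subseteq> {a..b}" "a \<notin> set xs" "length xs = m" using y sub ab ys True by auto
      ultimately show "xs \<in> {xs\<in>?A. a \<notin> set xs \<and> b \<in> set xs}" using ys by (simp add: AS0)
    qed
    have inj: "inj_on (\<lambda>ys. ys @ [b]) X" for X by (auto simp: inj_on_def)
    have mm: "1 + of_nat (m - Suc 0) = (of_nat m :: complex)" using True by (simp add: of_nat_diff)
    have "(\<Sum>xs\<in>(\<lambda>ys. ys @ [b]) ` AS n (r+1) (m-1). ?W xs) = (\<Sum>ys\<in>AS n (r+1) (m-1). WW n Q ys v * zb n Q (r+1) (v - of_nat m))"
      by (subst sum.reindex[OF inj]) (auto intro!: sum.cong simp: WW_snoc zJb a_def AS1 AS1' True mm)
    then show ?thesis using True unfolding E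
      by (simp add: SS_def sum_distrib_right)
  qed
  have S4: "(\<Sum>xs\<in>{xs\<in>?A. a \<in> set xs \<and> b \<in> set xs}. ?W xs) =
      (if 2 \<le> m \<and> m \<le> n - r then zp n Q (r+1) (v-1) * SS n Q (r+1) (m-2) (v-1) * zb n Q (r+1) (v - of_nat m) else 0)"
  proof -
    have D: "\<exists>ys. xs = a # ys @ [b] \<and> ys \<in> AS n (r+1) (m-2) \<and> 2 \<le> m \<and> m \<le> n - r"
      if xs: "xs \<in> {xs\<in>?A. a \<in> set xs \<and> b \<in> set xs}" for xs
    proof -
      obtain ys' where ys': "xs = a # ys'" using sorted_hd[of xs a] srt xs by (force simp: AS0)
      have "b \<in> set ys'" using xs ys' ab by auto
      moreover have "sorted_wrt (<) ys'" using srt[of xs] xs ys' by simp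
      ultimately obtain ys where ys: "ys' = ys @ [b]" using sorted_last[of ys' b] xs ys' by (force simp: AS0)
      have "a \<notin> set ys" using srt xs ys ys' by fastforce
      moreover have "b \<notin> set ys" using srt xs ys ys' by (fastforce simp: sorted_wrt_append)
      moreover have "set ys \<subseteq> {a..b}" using xs ys ys' by (auto simp: AS0)
      ultimately have st: "set ys \<subseteq> {a+1..2*n-a}" using hx by blast
      then have "admissible n ys \<and> length ys + 2 \<le> n + 1 - a" using adB xs ys ys' by (auto simp: AS0)
      then show ?thesis using st xs ys ys' by (auto simp: AS1 AS1' AS0 a_def)
    qed
    show ?thesis
    proof (cases "2 \<le> m \<and> m \<le> n - r")
      case False
      then have e: "{xs\<in>?A. a \<in> set xs \<and> b \<in> set xs} = {}" using D by blast
      show ?thesis unfolding e using False by (simp del: if_split) (meson)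
    next
      case True
      have E: "{xs\<in>?A. a \<in> set xs \<and> b \<in> set xs} = (\<lambda>ys. a # ys @ [b]) ` AS n (r+1) (m-2)"
      proof (intro equalityI subsetI)
        fix xs assume "xs \<in> {xs\<in>?A. a \<in> set xs \<and> b \<in> set xs}"
        then show "xs \<in> (\<lambda>ys. a # ys @ [b]) ` AS n (r+1) (m-2)" using D by blast
      next
        fix xs assume "xs \<in> (\<lambda>ys. a # ys @ [b]) ` AS n (r+1) (m-2)"
        then obtain ys where ys: "xs = a # ys @ [b]" "ys \<in> AS n (r+1) (m-2)" by blast
        then have y: "set ys \<subseteq> {a+1..2*n-a}" "length ys = m - 2" "admissible n ys" by (auto simp: AS1')
        have "admissible n xs" using y adB ys True by (simp add: a_def; arith)
        moreover have "set xs \<subseteq> {a..b}" "length xs = m" using y sub ab ys True by auto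
        ultimately show "xs \<in> {xs\<in>?A. a \<in> set xs \<and> b \<in> set xs}" using ys by (simp add: AS0)
      qed
      have inj: "inj_on (\<lambda>ys. a # ys @ [b]) X" for X by (auto simp: inj_on_def)
      have "(\<Sum>xs\<in>(\<lambda>ys. a # ys @ [b]) ` AS n (r+1) (m-2). ?W xs) = (\<Sum>ys\<in>AS n (r+1) (m-2). zp n Q (r+1) (v-1) * WW n Q ys (v-1) * zb n Q (r+1) (v - of_nat m))"
      proof (subst sum.reindex[OF inj], intro sum.cong refl)
        fix ys assume "ys \<in> AS n (r+1) (m-2)"
        then have l: "length ys = m - 2" by (simp add: AS1')
        have e2: "v - 1 - of_nat (length ys + 1) = v - of_nat m" using l True by (simp add: of_nat_diff)
        have "WW n Q (a # ys @ [b]) v = zJ n Q a (v-1) * (WW n Q ys (v-1) * zJ n Q b (v - 1 - of_nat (length ys + 1)))"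
          by (simp only: WW.simps WW_snoc)
        also have "\<dots> = zp n Q (r+1) (v-1) * WW n Q ys (v-1) * zb n Q (r+1) (v - of_nat m)"
          unfolding e2 zJa zJb by (simp add: a_def mult.assoc)
        finally show "((\<lambda>xs. WW n Q xs v) \<circ> (\<lambda>ys. a # ys @ [b])) ys = zp n Q (r+1) (v-1) * WW n Q ys (v-1) * zb n Q (r+1) (v - of_nat m)"
          by simp
      qed
      then show ?thesis using True unfolding E
        by (simp add: SS_def sum_distrib_right sum_distrib_left mult.assoc)
    qed
  qed
  show ?thesis using split S1 S2 S3 S4 by (simp add: add.assoc)
qed

definition yy :: "nat \<Rightarrow> (nat \<Rightarrow> complex \<Rightarrow> 'k::field) \<Rightarrow> nat \<Rightarrow> complex \<Rightarrow> 'k" where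
  "yy n Q a s = Ycal n Q a (s + of_nat a / 2)"

lemma yy0: "yy n Q 0 s = 1" by (simp add: yy_def Ycal_def)

lemma yy_nz:
  assumes "\<And>a v. 1 \<le> a \<Longrightarrow> a \<le> n \<Longrightarrow> Q a v \<noteq> 0" "a \<le> n"
  shows "yy n Q a s \<noteq> 0"
  using assms by (cases "a = 0") (auto simp: yy_def Ycal_def)

lemma zp_yy:
  assumes "1 \<le> a"
  shows "zp n Q a u = yy n Q a u / yy n Q (a-1) (u+1)"
proof -
  have e: "u + 1 + of_nat (a - 1) / 2 = u + (of_nat a + 1) / (2::complex)"
    using assms by (simp add: of_nat_diff field_simps)
  show ?thesis unfolding zp_def yy_def e ..
qed

lemma zb_yy:
  assumes "1 \<le> a" "a \<le> n"
  shows "zb n Q a u = yy n Q (a-1) (u + of_nat (n - a + 2)) / yy n Q a (u + of_nat (n - a + 2))"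
proof -
  have e1: "u + of_nat (n - a + 2) + of_nat (a - 1) / 2 = u + (2 * of_nat n - of_nat a + 3) / (2::complex)"
    using assms by (simp add: of_nat_diff field_simps)
  have e2: "u + of_nat (n - a + 2) + of_nat a / 2 = u + (2 * of_nat n - of_nat a + 4) / (2::complex)"
    using assms by (simp add: of_nat_diff field_simps)
  show ?thesis unfolding zb_def yy_def e1 e2 ..
qed

lemma XX:
  assumes "\<And>a v. 1 \<le> a \<Longrightarrow> a \<le> n \<Longrightarrow> Q a v \<noteq> 0" "1 \<le> n"
  shows "Xmid n Q u * Xmid n Q (u-1) = yy n Q n u / yy n Q n (u+1)"
proof -
  define q where "q = (\<lambda>t::complex. Q n (u + of_nat n / 2 + t))"
  have nz: "q t \<noteq> 0" for t using assms by (simp add: q_def)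
  have A: "Xmid n Q u = q 0 * q 2 / (q 1)^2"
    by (simp add: Xmid_def q_def field_simps add.commute add.left_commute)
  have B: "Xmid n Q (u-1) = q (-1) * q 1 / (q 0)^2"
    by (simp add: Xmid_def q_def field_simps add.commute add.left_commute)
  have C: "yy n Q n u = q (-1) / q 1"
    using assms(2) by (simp add: yy_def Ycal_def dA_def q_def assms diff_divide_distrib add.commute add.left_commute) (simp add: algebra_simps)
  have D: "yy n Q n (u+1) = q 0 / q 2"
    using assms(2) by (simp add: yy_def Ycal_def dA_def q_def assms add.commute add.left_commute)
  show ?thesis unfolding A B C D using nz by (simp add: field_simps power2_eq_square)
qed

definition Sz :: "nat \<Rightarrow> (nat \<Rightarrow> complex \<Rightarrow> 'k::field) \<Rightarrow> nat \<Rightarrow> int \<Rightarrow> complex \<Rightarrow> 'k" where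
  "Sz n Q r p w = (if p < 0 then 0 else SS n Q r (nat p) w)"

lemma SS_top: "SS n Q n m w = (if m = 0 then 1 else 0)"
proof -
  have "AS n n m = (if m = 0 then {[]} else {})"
    by (auto simp: AS_def admissible_def)
  then show ?thesis by (simp add: SS_def)
qed

lemma Sz_neg: "p < 0 \<Longrightarrow> Sz n Q r p w = 0" by (simp add: Sz_def)

lemma Sz_rec:
  assumes rn: "r < n"
  shows "Sz n Q r p v = Sz n Q (r+1) p v + zp n Q (r+1) (v-1) * Sz n Q (r+1) (p-1) (v-1)
     + Sz n Q (r+1) (p-1) v * zb n Q (r+1) (v - of_int p)
     + (if p \<le> int (n-r) then zp n Q (r+1) (v-1) * Sz n Q (r+1) (p-2) (v-1) * zb n Q (r+1) (v - of_int p) else 0)"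
proof (cases "p < 0")
  case True then show ?thesis by (simp add: Sz_def)
next
  case False
  define m where "m = nat p"
  have p: "p = int m" using False by (simp add: m_def)
  note R = SS_rec[OF rn, of Q m v]
  consider "m = 0" | "m = 1" | "m \<ge> 2" by linarith
  then show ?thesis
  proof cases
    case 1 then show ?thesis using R p by (simp add: Sz_def)
  next
    case 2 then show ?thesis using R p rn by (simp add: Sz_def)
  next
    case 3
    have a: "nat (p - 1) = m - 1" "nat (p - 2) = m - 2" using p by auto
    have b: "(of_int p :: complex) = of_nat m" using p by simp
    have c: "Sz n Q r p v = SS n Q r m v" "Sz n Q (r+1) p v = SS n Q (r+1) m v"
      "Sz n Q (r+1) (p-1) w = SS n Q (r+1) (m-1) w" "Sz n Q (r+1) (p-2) w = SS n Q (r+1) (m-2) w" for w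
      using p 3 a by (simp_all add: Sz_def)
    have d: "(p \<le> int (n - r)) = (2 \<le> m \<and> m \<le> n - r)" using p 3 by auto
    show ?thesis unfolding c b d R using 3 by simp
  qed
qed

lemma Sz_van:
  assumes "r \<le> n" "p > int (n - r)"
  shows "Sz n Q r p w = 0"
  using assms
proof (induction "n - r" arbitrary: r p w)
  case 0
  then have "r = n" by simp
  then show ?case using 0 by (simp add: Sz_def SS_top)
next
  case (Suc j)
  then have rn: "r < n" by simp
  have IH: "\<And>q w. q > int (n - (r+1)) \<Longrightarrow> Sz n Q (r+1) q w = 0"
  proof -
    fix q w assume "q > int (n - (r+1))"
    moreover have "j = n - (r+1)" using Suc.hyps(2) by simp
    ultimately show "Sz n Q (r+1) q w = 0" using Suc.hyps(1)[of "r+1" q w] rn by simp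
  qed
  have h: "int (n - (r+1)) = int (n - r) - 1" using rn by simp
  show ?case
    by (subst Sz_rec[OF rn]) (use Suc.prems IH h in simp)
qed

definition GG :: "nat \<Rightarrow> (nat \<Rightarrow> complex \<Rightarrow> 'k::field) \<Rightarrow> nat \<Rightarrow> int \<Rightarrow> complex \<Rightarrow> 'k" where
  "GG n Q r m w = (if m < 0 then 0 else if m \<le> int (n - r) then Sz n Q r m w
     else if m = int (n - r) + 1 then 0
     else - (yy n Q r (w + of_int (int (n - r) + 1 - m)) / yy n Q r w) * Sz n Q r (2 * int (n - r) + 2 - m) (w + of_int (int (n - r) + 1 - m)))"

lemma GG_low:
  assumes "r \<le> n" "m \<le> int (n - r) + 1"
  shows "GG n Q r m w = Sz n Q r m w"
proof (cases "m = int (n - r) + 1")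
  case True
  then have "Sz n Q r m w = 0" using assms by (intro Sz_van) auto
  then show ?thesis using True by (simp add: GG_def)
next
  case False
  then show ?thesis using assms by (simp add: GG_def Sz_neg)
qed

lemma GG_high:
  assumes "r \<le> n" "m \<ge> int (n - r) + 1" "v = w + of_int (int (n - r) + 1 - m)" "p = 2 * int (n - r) + 2 - m"
  shows "GG n Q r m w = - (yy n Q r v / yy n Q r w) * Sz n Q r p v"
proof (cases "m = int (n - r) + 1")
  case True
  then have "Sz n Q r p v = 0" using assms by (intro Sz_van) auto
  then show ?thesis using True by (simp add: GG_def)
next
  case False
  then show ?thesis using assms by (simp add: GG_def)
qed

lemma GG_rec:
  fixes Q :: "nat \<Rightarrow> complex \<Rightarrow> 'k::field"
  assumes Qnz: "\<And>a v. 1 \<le> a \<Longrightarrow> a \<le> n \<Longrightarrow> Q a v \<noteq> 0" and rn: "r < n"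
  shows "GG n Q r m w = zp n Q (r+1) (w-1) * GG n Q (r+1) (m-2) (w-1) * zb n Q (r+1) (w - of_int m)
    + zp n Q (r+1) (w-1) * GG n Q (r+1) (m-1) (w-1) + GG n Q (r+1) (m-1) w * zb n Q (r+1) (w - of_int m)
    + GG n Q (r+1) m w"
proof -
  define K where "K = int (n - r)"
  have K1: "int (n - (r+1)) = K - 1" using rn by (simp add: K_def)
  have r1: "r + 1 \<le> n" "r \<le> n" using rn by auto
  have nzr: "yy n Q r s \<noteq> 0" for s by (rule yy_nz[where Q=Q]) (use Qnz r1 in auto)
  have nza: "yy n Q (r+1) s \<noteq> 0" for s by (rule yy_nz[where Q=Q]) (use Qnz r1 in auto)
  have al: "zp n Q (r+1) (u-1) = yy n Q (r+1) (u-1) / yy n Q r u" for u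
    using zp_yy[of "r+1" n Q "u-1"] by simp
  have be: "zb n Q (r+1) u = yy n Q r (u + of_int (K+1)) / yy n Q (r+1) (u + of_int (K+1))" for u
  proof -
    have "(of_nat (n - (r+1) + 2) :: complex) = of_int (K+1)" using rn by (simp add: K_def of_nat_diff)
    then show ?thesis using zb_yy[of "r+1" n Q u] r1 by (simp add: add.commute)
  qed
  consider "m \<le> K" | "m = K + 1" | "m \<ge> K + 2" by linarith
  then show ?thesis
  proof cases
    case 1
    have L: "GG n Q r m w = Sz n Q r m w" by (rule GG_low[OF r1(2)]) (use 1 in \<open>simp add: K_def\<close>)
    have L': "GG n Q (Suc r) j u = Sz n Q (Suc r) j u" if "j \<le> m" for j u
      using GG_low[OF r1(1), of j Q u] that 1 K1 by simp
    note R = Sz_rec[OF rn, of Q m w]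
    show ?thesis unfolding L
      using R 1 K_def by (simp add: algebra_simps L')
  next
    case 2
    have L: "GG n Q r m w = 0" using 2 by (simp add: GG_def K_def)
    have G0: "GG n Q (r+1) m w = - (yy n Q (r+1) (w-1) / yy n Q (r+1) w) * Sz n Q (r+1) (K-1) (w-1)"
      by (rule GG_high[OF r1(1)]) (use 2 K1 in simp_all)
    have G1: "GG n Q (r+1) (m-1) u = 0" for u
    proof -
      have "GG n Q (r+1) (m-1) u = Sz n Q (r+1) (m-1) u" by (rule GG_low[OF r1(1)]) (use 2 K1 in simp)
      also have "\<dots> = 0" by (rule Sz_van[OF r1(1)]) (use 2 K1 in simp)
      finally show ?thesis .
    qed
    have G2: "GG n Q (r+1) (m-2) (w-1) = Sz n Q (r+1) (K-1) (w-1)"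
      using GG_low[OF r1(1), of "m-2" Q "w-1"] 2 K1 by simp
    have B: "zb n Q (r+1) (w - of_int m) = yy n Q r w / yy n Q (r+1) w"
      using be[of "w - of_int m"] 2 by simp
    show ?thesis unfolding L G0 G1 G2 B al using nzr nza by (simp add: field_simps)
  next
    case 3
    define v where "v = w + of_int (K + 1 - m)"
    define p where "p = 2 * K + 2 - m"
    have L: "GG n Q r m w = - (yy n Q r v / yy n Q r w) * Sz n Q r p v"
      by (rule GG_high[OF r1(2)]) (use 3 in \<open>simp_all add: K_def v_def p_def\<close>)
    note R = Sz_rec[OF rn, of Q p v]
    have pK: "p \<le> int (n - r)" using 3 by (simp add: p_def K_def)
    have Bv: "zb n Q (r+1) (v - of_int p) = yy n Q r w / yy n Q (r+1) w"
    proof -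
      have "v - of_int p + of_int (K+1) = w" by (simp add: v_def p_def algebra_simps)
      then show ?thesis using be[of "v - of_int p"] by simp
    qed
    have Bw: "zb n Q (r+1) (w - of_int m) = yy n Q r v / yy n Q (r+1) v"
    proof -
      have "w - of_int m + of_int (K+1) = v" by (simp add: v_def algebra_simps)
      then show ?thesis using be[of "w - of_int m"] by simp
    qed
    have Av: "zp n Q (r+1) (v-1) = yy n Q (r+1) (v-1) / yy n Q r v" by (rule al)
    have Aw: "zp n Q (r+1) (w-1) = yy n Q (r+1) (w-1) / yy n Q r w" by (rule al)
    have G0: "GG n Q (r+1) m w = - (yy n Q (r+1) (v-1) / yy n Q (r+1) w) * Sz n Q (r+1) (p-2) (v-1)"
      by (rule GG_high[OF r1(1)]) (use 3 K1 in \<open>simp_all add: v_def p_def algebra_simps\<close>)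
    have G1a: "GG n Q (r+1) (m-1) (w-1) = - (yy n Q (r+1) (v-1) / yy n Q (r+1) (w-1)) * Sz n Q (r+1) (p-1) (v-1)"
      by (rule GG_high[OF r1(1)]) (use 3 K1 in \<open>simp_all add: v_def p_def algebra_simps\<close>)
    have G1b: "GG n Q (r+1) (m-1) w = - (yy n Q (r+1) v / yy n Q (r+1) w) * Sz n Q (r+1) (p-1) v"
      by (rule GG_high[OF r1(1)]) (use 3 K1 in \<open>simp_all add: v_def p_def algebra_simps\<close>)
    have G2: "GG n Q (r+1) (m-2) (w-1) = - (yy n Q (r+1) v / yy n Q (r+1) (w-1)) * Sz n Q (r+1) p v"
      by (rule GG_high[OF r1(1)]) (use 3 K1 in \<open>simp_all add: v_def p_def algebra_simps\<close>)
    show ?thesis unfolding L R G0 G1a G1b G2 Bv Bw Av Aw using pK nzr nza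
      by (simp add: field_simps)
  qed
qed

definition fL :: "nat \<Rightarrow> (nat \<Rightarrow> complex \<Rightarrow> 'k::field) \<Rightarrow> nat \<Rightarrow> 'k dop" where
  "fL n Q i = dop_lin (\<lambda>v. xN n Q i (v + of_int (int n + 1 - int i)))"

definition Lr :: "nat \<Rightarrow> (nat \<Rightarrow> complex \<Rightarrow> 'k::field) \<Rightarrow> nat \<Rightarrow> 'k dop" where
  "Lr n Q r = foldr dop_mult (map (fL n Q) [r+1..<2*n+3-r]) dop_one"

lemma Lop_Lr: "Lop n Q = Lr n Q 0"
  unfolding Lop_def Lr_def fL_def[abs_def] by simp

lemma Lr_step:
  assumes "r < n"
  shows "Lr n Q r = dop_mult (fL n Q (r+1)) (dop_mult (Lr n Q (r+1)) (fL n Q (2*n+2-r)))"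
proof -
  have e: "2*n+3-r = Suc (2*n+2-r)" using assms by simp
  have lt: "r+1 < 2*n+2-r" using assms by simp
  have e2: "[r+1..<2*n+2-r] = (r+1) # [r+2..<2*n+2-r]"
    using upt_conv_Cons[OF lt] by (simp add: numeral_2_eq_2)
  have s1: "[r+1..<2*n+3-r] = [r+1..<2*n+2-r] @ [2*n+2-r]"
    unfolding e using lt by simp
  have "[r+1..<2*n+3-r] = (r+1) # [r+2..<2*n+2-r] @ [2*n+2-r]"
    unfolding s1 e2 by simp
  moreover have "[r+1+1..<2*n+3-(r+1)] = [r+2..<2*n+2-r]" using assms by simp
  ultimately show ?thesis
    unfolding Lr_def
    by (simp add: foldr_dop[of _ "fL n Q (Suc (Suc (2 * n)) - r)"] dop_one_right)
qed

lemma GG_big: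
  assumes "r \<le> n" "j > 2 * int (n - r) + 2"
  shows "GG n Q r j w = 0"
  using GG_high[OF assms(1), where m=j and w=w and v="w + of_int (int (n - r) + 1 - j)" and p="2 * int (n - r) + 2 - j" and Q=Q] assms
  by (simp add: Sz_neg)

lemma Lr_claim:
  fixes Q :: "nat \<Rightarrow> complex \<Rightarrow> 'k::field"
  assumes Qnz: "\<And>a v. 1 \<le> a \<Longrightarrow> a \<le> n \<Longrightarrow> Q a v \<noteq> 0" and n1: "1 \<le> n" and rn: "r \<le> n"
  shows "Lr n Q r k u = (-1)^k * GG n Q r (2 * int (n - r) + 2 - int k) (u + of_int (int (n - r) + 1))"
  using rn
proof (induction "n - r" arbitrary: r k u)
  case 0
  then have r: "r = n" by simp
  have L: "Lr n Q n = dop_mult (fL n Q (n+1)) (fL n Q (n+2))"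
  proof -
    have "[n+1..<2*n+3-n] = [n+1, n+2]" by (simp add: upt_rec)
    then show ?thesis by (simp add: Lr_def dop_one_right)
  qed
  have f1: "fL n Q (n+1) = dop_lin (Xmid n Q)" by (simp add: fL_def xN_def)
  have f2: "fL n Q (n+2) = dop_lin (\<lambda>v. - Xmid n Q (v - 1))" by (simp add: fL_def xN_def)
  have G: "GG n Q n m w = (if m < 0 then 0 else if m = 0 then 1 else if m = 1 then 0
      else - (yy n Q n (w + of_int (1 - m)) / yy n Q n w) * Sz n Q n (2 - m) (w + of_int (1 - m)))" for m w
    by (simp add: GG_def Sz_def SS_top)
  have X: "Xmid n Q u * Xmid n Q (u-1) = yy n Q n u / yy n Q n (u+1)" by (rule XX[OF Qnz n1])
  consider "k = 0" | "k = 1" | "k = 2" | "k \<ge> 3" by linarith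
  then show ?case
  proof cases
    case 1 then show ?thesis using X unfolding r L f1 f2 lin_mult
      by (simp add: G dop_lin_def Sz_def SS_top)
  next
    case 2 then show ?thesis unfolding r L f1 f2 lin_mult
      by (simp add: G dop_lin_def)
  next
    case 3 then show ?thesis unfolding r L f1 f2 lin_mult
      by (simp add: G dop_lin_def Sz_def SS_top)
  next
    case 4 then show ?thesis unfolding r L f1 f2 lin_mult
      by (simp add: G dop_lin_def)
  qed
next
  case (Suc j)
  then have rn: "r < n" by simp
  define K where "K = int (n - r)"
  have K1: "int (n - (r+1)) = K - 1" using rn by (simp add: K_def)
  have Ki: "K = int n - int r" using rn by (simp add: K_def)
  have Kc: "(of_int K :: complex) = of_nat n - of_nat r" using rn by (simp add: K_def of_nat_diff)
  have IH: "Lr n Q (r+1) k' u' = (-1)^k' * GG n Q (r+1) (2 * K - int k') (u' + of_int K)" for k' u'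
  proof -
    have "j = n - (r+1)" using Suc.hyps(2) by simp
    then show ?thesis using Suc.hyps(1)[of "r+1" k' u'] rn K1 by (simp add: Ki Kc)
  qed
  define w where "w = u + of_int (K + 1)"
  define m where "m = 2 * K + 2 - int k"
  have f: "fL n Q (r+1) = dop_lin (\<lambda>v. zp n Q (r+1) (v + of_int K))"
  proof -
    have "(of_int (int n + 1 - int (r+1)) :: complex) = of_int K" using rn by (simp add: K_def)
    then show ?thesis using rn by (simp add: fL_def xN_def)
  qed
  have g: "fL n Q (2*n+2-r) = dop_lin (\<lambda>v. zb n Q (r+1) (v - of_int (K+1)))"
  proof -
    have "(of_int (int n + 1 - int (2*n+2-r)) :: complex) = - of_int (K+1)" using rn by (simp add: K_def of_nat_diff)
    moreover have i1: "\<not> (2*n+2-r \<le> n)" "2*n+2-r \<noteq> n+1" "2*n+2-r \<noteq> n+2" "2*n+3-(2*n+2-r) = r+1" using rn by auto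
    moreover have "xN n Q (2*n+2-r) x = zb n Q (r+1) x" for x unfolding xN_def using i1 by simp
    moreover have "\<And>v. v + of_int (int n + 1 - int (2*n+2-r)) = v - (of_int (K+1) :: complex)"
      using rn by (simp add: K_def of_nat_diff)
    ultimately show ?thesis unfolding fL_def by presburger
  qed
  have al: "zp n Q (r+1) (u + of_int K) = zp n Q (r+1) (w - 1)" by (simp add: w_def)
  have be: "zb n Q (r+1) (u + of_nat k - of_int (K+1)) = zb n Q (r+1) (w - of_int m)"
  proof -
    have "u + of_nat k - of_int (K+1) = w - of_int m" by (simp add: w_def m_def algebra_simps)
    then show ?thesis by simp
  qed
  have be': "zb n Q (r+1) (u + 1 + of_nat (k - 1) - of_int (K+1)) = zb n Q (r+1) (w - of_int m)" if "k \<ge> 1"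
  proof -
    have "u + 1 + of_nat (k - 1) - of_int (K+1) = w - of_int m" using that by (simp add: w_def m_def algebra_simps of_nat_diff)
    then show ?thesis by simp
  qed
  have rec: "GG n Q r m w = zp n Q (r+1) (w-1) * GG n Q (r+1) (m-2) (w-1) * zb n Q (r+1) (w - of_int m)
    + zp n Q (r+1) (w-1) * GG n Q (r+1) (m-1) (w-1) + GG n Q (r+1) (m-1) w * zb n Q (r+1) (w - of_int m)
    + GG n Q (r+1) m w" by (rule GG_rec[OF Qnz rn])
  have big: "GG n Q (r+1) i x = 0" if "i > 2 * K" for i x
    using GG_big[of "r+1" n i Q x] rn that K1 by simp
  have A0: "Lr n Q (r+1) k u = (-1)^k * GG n Q (r+1) (m-2) (w-1)"
  proof -
    have "m - 2 = 2*K - int k" "w - 1 = u + of_int K" by (simp_all add: m_def w_def)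
    then show ?thesis by (simp only: IH)
  qed
  have A1: "Lr n Q (r+1) (k-1) u = - ((-1)^k * GG n Q (r+1) (m-1) (w-1))" if "k \<ge> 1"
  proof -
    have "(-1::'k)^k = - ((-1)^(k-1))" using that by (cases k) auto
    moreover have "2 * K - int (k - 1) = m - 1" using that by (simp add: m_def)
    moreover have "u + of_int K = w - 1" by (simp add: w_def)
    ultimately show ?thesis by (simp only: IH) simp
  qed
  have A2: "Lr n Q (r+1) (k-1) (u+1) = - ((-1)^k * GG n Q (r+1) (m-1) w)" if "k \<ge> 1"
  proof -
    have "(-1::'k)^k = - ((-1)^(k-1))" using that by (cases k) auto
    moreover have "2 * K - int (k - 1) = m - 1" using that by (simp add: m_def)
    moreover have "u + 1 + of_int K = w" by (simp add: w_def)
    ultimately show ?thesis by (simp only: IH) simp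
  qed
  have A3: "Lr n Q (r+1) (k-1-1) (u+1) = (-1)^k * GG n Q (r+1) m w" if "k \<ge> 2"
  proof -
    have "(-1::'k)^k = (-1)^(k-1-1)" using that by (cases k; cases "k-1") auto
    moreover have "2 * K - int (k - 1 - 1) = m" using that by (simp add: m_def)
    moreover have "u + 1 + of_int K = w" by (simp add: w_def)
    ultimately show ?thesis by (simp only: IH)
  qed
  have main: "Lr n Q r k u = (-1)^k * GG n Q r m w"
  proof -
    have E: "Lr n Q r k u = zp n Q (r+1) (u + of_int K) * (Lr n Q (r+1) k u * zb n Q (r+1) (u + of_nat k - of_int (K+1))
          - (if k \<ge> 1 then Lr n Q (r+1) (k-1) u else 0))
        - (if k \<ge> 1 then Lr n Q (r+1) (k-1) (u+1) * zb n Q (r+1) (u + 1 + of_nat (k - 1) - of_int (K+1))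
             - (if k - 1 \<ge> 1 then Lr n Q (r+1) (k-1-1) (u+1) else 0) else 0)"
      unfolding Lr_step[OF rn] f g lin_mult mult_lin by simp
    consider "k = 0" | "k = 1" | "k \<ge> 2" by linarith
    then show ?thesis
    proof cases
      case 1
      have "GG n Q (r+1) (m-1) x = 0" "GG n Q (r+1) m x = 0" for x using big 1 by (simp_all add: m_def)
      then show ?thesis unfolding E rec al be A0 using 1 by (simp add: algebra_simps)
    next
      case 2
      have "GG n Q (r+1) m x = 0" for x using big 2 by (simp_all add: m_def)
      then show ?thesis unfolding E rec al be A0 using 2 A1 A2 be' by (simp add: algebra_simps)
    next
      case 3
      then have k1: "1 \<le> k - 1" "1 \<le> k" by simp_all
      then show ?thesis unfolding E rec al be A0 using A1 A2 A3[OF 3] be' by (simp add: algebra_simps)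
    qed
  qed
  show ?case using main by (simp add: K_def m_def w_def)
qed

theorem mainTheorem4:
  fixes n :: nat and Q :: "nat \<Rightarrow> complex \<Rightarrow> 'k::field" and k :: nat and u :: complex
  assumes "n \<ge> 2"
    and "\<And>a v. 1 \<le> a \<Longrightarrow> a \<le> n \<Longrightarrow> Q a v \<noteq> 0"
  shows "Lop n Q k u =
    (if k \<le> n then - ((-1) ^ k * T1 n Q k (u + of_nat k / 2))
     else if n + 2 \<le> k \<and> k \<le> 2 * n + 2 then (-1) ^ k * T1 n Q (2 * n + 2 - k) (u + of_nat k / 2)
     else 0)"
proof -
  have n1: "1 \<le> n" using assms(1) by simp
  have C: "Lop n Q k u = (-1)^k * GG n Q 0 (2 * int n + 2 - int k) (u + of_int (int n + 1))"
    using Lr_claim[OF assms(2) n1, where r=0 and k=k and u=u] by (simp add: Lop_Lr)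
  consider "k \<le> n" | "k = n + 1" | "n + 2 \<le> k \<and> k \<le> 2 * n + 2" | "k > 2 * n + 2" by linarith
  then show ?thesis
  proof cases
    case 1
    have G: "GG n Q 0 (2 * int n + 2 - int k) (u + of_int (int n + 1)) = - (yy n Q 0 (u + of_nat k) / yy n Q 0 (u + of_int (int n + 1))) * Sz n Q 0 (int k) (u + of_nat k)"
      by (rule GG_high) (use 1 in simp_all)
    have T: "T1 n Q k (u + of_nat k / 2) = SS n Q 0 k (u + of_nat k)"
      by (simp add: T1_SS add.commute)
    show ?thesis unfolding C G T using 1 by (simp add: yy0 Sz_def)
  next
    case 2
    then show ?thesis unfolding C by (simp add: GG_def)
  next
    case 3
    have G: "GG n Q 0 (2 * int n + 2 - int k) (u + of_int (int n + 1)) = Sz n Q 0 (2 * int n + 2 - int k) (u + of_int (int n + 1))"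
      by (rule GG_low) (use 3 in simp_all)
    have e: "u + of_nat k / 2 + of_nat (2 * n + 2 - k) / 2 = u + of_int (int n + 1)"
      using 3 by (simp add: of_nat_diff field_simps)
    have T: "T1 n Q (2 * n + 2 - k) (u + of_nat k / 2) = SS n Q 0 (2 * n + 2 - k) (u + of_int (int n + 1))"
      by (simp only: T1_SS e)
    have s: "Sz n Q 0 (2 * int n + 2 - int k) w = SS n Q 0 (2 * n + 2 - k) w" for w
    proof -
      have "nat (2 * int n + 2 - int k) = 2 * n + 2 - k" using 3 by arith
      then show ?thesis using 3 by (simp add: Sz_def)
    qed
    show ?thesis unfolding C G T s using 3 by simp
  next
    case 4
    then show ?thesis unfolding C by (simp add: GG_def)
  qed
qed

end
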